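(* Let $K$ be a circle of radius $1$ and centre $O$. Let $A,B\in K$ be such that the triangle $OAB$ is positively (counter-clockwise) oriented and $\eta=\angle BOA<1/5$. Let $K_A$ and $K_B$ be the circles obtained by rotating $K$ about the points $A$ and $B$ in the positive direction by the angles $\alpha$ and $\beta$ respectively, where $0<\alpha<3\beta/4$ and $\beta<\eta$. Then one of the intersection points of $K_A$ and $K_B$ lies inside $K$, and its distance from $A$ is less than $20\eta$.
   Context: The positive direction of rotation is counter-clockwise. *)

theory Defs
  imports "HOL-Analysis.Analysis"
begin

definition rot :: "complex \<Rightarrow> real \<Rightarrow> complex \<Rightarrow> complex" where
  "rot c t z = c + cis t * (z - c)"

end

theory Submission
  imports Defs
begin

lemma cis2: "cis (2*(x::real)) - 1 = 2 * \<i> * complex_of_real (sin x) * cis x"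
proof -
  have c: "cos (2*x) = 1 - 2*(sin x)^2" by (rule cos_double_sin)
  have s: "sin (2*x) = 2 * sin x * cos x" by (rule sin_double)
  show ?thesis by (simp add: complex_eq_iff c s power2_eq_square)
qed
lemma normw: "(cmod (1 + 2*\<i>*(complex_of_real pp * cis x + complex_of_real qq * cis y)))\<^sup>2 - 1
   = 4*(pp^2 + qq^2 + 2*pp*qq*cos (x - y)) - 4*(pp * sin x + qq * sin y)"
proof -
  have sx: "(sin x)^2 + (cos x)^2 = 1" and sy: "(sin y)^2 + (cos y)^2 = 1" by simp_all
  have "(cmod (1 + 2*\<i>*(complex_of_real pp * cis x + complex_of_real qq * cis y)))\<^sup>2
     = (1 - 2*(pp * sin x + qq * sin y))^2 + (2*(pp*cos x + qq * cos y))^2"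
    unfolding cmod_power2 by (simp add: algebra_simps)
  also have "\<dots> = 1 + 4*(pp^2*((sin x)^2 + (cos x)^2) + qq^2*((sin y)^2 + (cos y)^2) + 2*pp*qq*(cos x * cos y + sin x * sin y)) - 4*(pp * sin x + qq * sin y)"
    by (simp add: power2_eq_square algebra_simps del: sin_cos_squared_add sin_cos_squared_add2 sin_cos_squared_add3)
  finally show ?thesis unfolding sx sy cos_diff by simp
qed
lemma sindiff: "sin (t::real) - sin (2*a+t) = -2 * sin a * cos (a+t)"
proof -
  have "sin (2*a+t) = sin ((a+t)+a)" by (rule arg_cong[where f=sin]) simp
  also have "\<dots> = sin (a+t) * cos a + cos (a+t) * sin a" by (rule sin_add)
  finally have e1: "sin (2*a+t) = sin (a+t) * cos a + cos (a+t) * sin a" .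
  have "sin t = sin ((a+t)-a)" by simp
  also have "\<dots> = sin (a+t) * cos a - cos (a+t) * sin a" by (rule sin_diff)
  finally have e2: "sin t = sin (a+t) * cos a - cos (a+t) * sin a" .
  show ?thesis unfolding e1 e2 by (simp add: algebra_simps)
qed
lemma key: fixes a b h t :: real
  shows "(cmod (1 + cis (2*a) * (cis (2*t) - 1) - cis (2*h) * (1 - cis (2*b))))\<^sup>2 - 1
   = 8*(sin t * sin b * cos (2*a+t-2*h-b) - sin t * sin a * cos (a+t) - sin b * sin h * cos (h+b))"
proof -
  have e: "1 + cis (2*a) * (cis (2*t) - 1) - cis (2*h) * (1 - cis (2*b))
     = 1 + 2*\<i>*(complex_of_real (sin t) * cis (2*a+t) + complex_of_real (sin b) * cis (2*h+b))"
  proof -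
    have "1 + cis (2*a) * (cis (2*t) - 1) - cis (2*h) * (1 - cis (2*b))
      = 1 + cis (2*a) * (cis (2*t) - 1) + cis (2*h) * (cis (2*b) - 1)" by (simp add: algebra_simps)
    also have "\<dots> = 1 + 2*\<i>*(complex_of_real (sin t) * (cis (2*a) * cis t) + complex_of_real (sin b) * (cis (2*h) * cis b))"
      unfolding cis2 by (simp add: algebra_simps)
    finally show ?thesis by (simp only: cis_mult)
  qed
  have s1: "sin t - sin (2*a+t) = -2 * sin a * cos (a+t)" by (rule sindiff)
  have s2: "sin b - sin (2*h+b) = -2 * sin h * cos (h+b)" by (rule sindiff)
  have x: "2*a+t-(2*h+b) = 2*a+t-2*h-b" by simp
  have "4 * ((sin t)\<^sup>2 + (sin b)\<^sup>2 + 2 * sin t * sin b * cos (2 * a + t - 2 * h - b)) -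
    4 * (sin t * sin (2 * a + t) + sin b * sin (2 * h + b)) =
     8 * sin t * sin b * cos (2 * a + t - 2 * h - b) + 4 * sin t * (sin t - sin (2*a+t)) + 4 * sin b * (sin b - sin (2*h+b))"
      by (simp add: power2_eq_square algebra_simps)
  also have "\<dots> = 8 * (sin t * sin b * cos (2 * a + t - 2 * h - b) - sin t * sin a * cos (a + t) - sin b * sin h * cos (h + b))"
      unfolding s1 s2 by (simp add: algebra_simps)
  finally have calc: "4 * ((sin t)\<^sup>2 + (sin b)\<^sup>2 + 2 * sin t * sin b * cos (2 * a + t - 2 * h - b)) -
    4 * (sin t * sin (2 * a + t) + sin b * sin (2 * h + b)) = 8 * (sin t * sin b * cos (2 * a + t - 2 * h - b) - sin t * sin a * cos (a + t) - sin b * sin h * cos (h + b))" .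
  show ?thesis
    apply (subst e)
    apply (subst normw)
    apply (subst x)
    apply (rule calc)
    done
qed

lemma cos_lb: "cos (x::real) \<ge> 1 - x^2/2"
proof -
  have "cos x = cos (2*(x/2))" by simp
  also have "\<dots> = 1 - 2*(sin (x/2))^2" by (rule cos_double_sin)
  finally have c: "cos x = 1 - 2*(sin (x/2))^2" .
  have "\<bar>sin (x/2)\<bar> \<le> \<bar>x/2\<bar>" by (rule abs_sin_x_le_abs_x)
  then have "(sin (x/2))^2 \<le> (x/2)^2"
    by (metis abs_le_square_iff)
  then show ?thesis unfolding c by (simp add: power2_eq_square)
qed
lemma sin_lb: "sin (x::real) \<ge> x - x^3/6 - \<bar>x\<bar>^5/120"
proof -
  have "\<bar>sin x - (\<Sum>m<5. sin_coeff m * x ^ m)\<bar> \<le> inverse (fact 5) * \<bar>x\<bar> ^ 5"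
    by (rule Maclaurin_sin_bound)
  moreover have "(\<Sum>m<5. sin_coeff m * x ^ m) = x - x^3/6"
    by (simp add: lessThan_nat_numeral sin_coeff_def fact_numeral)
  moreover have "(fact 5::real) = 120" by (simp add: fact_numeral)
  ultimately have A: "\<bar>sin x - (x - x^3/6)\<bar> \<le> \<bar>x\<bar>^5/120" by simp
  then show ?thesis unfolding abs_le_iff by linarith
qed
lemma sin_diff_lb:
  assumes "0 \<le> a" "a < b" "b \<le> pi"
  shows "sin b - sin a \<ge> (b - a) * cos b"
proof -
  obtain z where z: "a < z" "z < b" "sin b - sin a = (b - a) * cos z"
    using MVT2[of a b sin cos] assms(2) by (auto intro: DERIV_sin)
  have "cos b \<le> cos z" using z assms by (intro cos_monotone_0_pi_le) auto
  then show ?thesis using z assms by (simp add: mult_left_mono)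
qed
lemma pos:
  fixes a b h :: real
  assumes "0<a" "a < 3*b/4" "b<h" "h<1/10"
  shows "0 < sin (8*h) * sin b * cos (2*a+8*h-2*h-b) - sin (8*h) * sin a * cos (a+8*h) - sin b * sin h * cos (h+b)"
proof -
  have b0: "0 < b" and h0: "0 < h" using assms by linarith+
  have pi2: "2 \<le> pi" by (rule pi_ge_two)
  have cXY: "cos (a+8*h) \<le> cos (2*a+8*h-2*h-b)"
    by (rule cos_monotone_0_pi_le) (use assms pi2 in linarith)+
  have h2: "h^2 \<le> 1/100" 
  proof -
    have "h^2 \<le> (1/10)^2" using h0 assms(4) by (intro power_mono) auto
    then show ?thesis by (simp add: power2_eq_square)
  qed
  have h4: "h^4 \<le> 1/10000"
  proof -
    have "h^4 = (h^2)^2" by simp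
    also have "\<dots> \<le> (1/100)^2" using h2 by (intro power_mono) auto
    finally show ?thesis by (simp add: power2_eq_square)
  qed
  have "sin (8*h) \<ge> 8*h - (8*h)^3/6 - \<bar>8*h\<bar>^5/120" by (rule sin_lb)
  moreover have "(8*h)^3 = 512 * (h * h^2)" by (simp add: power2_eq_square power3_eq_cube)
  moreover have "\<bar>8*h\<bar>^5 = 32768 * (h * h^4)" using h0 by (simp add: power_mult_distrib) (simp add: eval_nat_numeral)
  moreover have "h * h^2 \<le> h/100" using mult_left_mono[OF h2, of h] h0 by simp
  moreover have "h * h^4 \<le> h/10000" using mult_left_mono[OF h4, of h] h0 by simp
  ultimately have s8: "sin (8*h) \<ge> 7*h" using h0 by linarith
  have Y: "a + 8*h \<le> 7/8" using assms by linarith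
  have "(a+8*h)^2 \<le> (7/8)^2" using Y assms by (intro power_mono) auto
  then have cY: "cos (a+8*h) \<ge> 61/100" using cos_lb[of "a+8*h"] by (simp add: power2_eq_square)
  have "b^2 \<le> (1/10)^2" using assms b0 by (intro power_mono) auto
  then have cb: "cos b \<ge> 99/100" using cos_lb[of b] by (simp add: power2_eq_square)
  have "sin b - sin a \<ge> (b - a) * cos b"
    by (rule sin_diff_lb) (use assms pi2 in linarith)+
  moreover have "(b - a) * cos b \<ge> (b/4) * (99/100)"
    by (rule mult_mono) (use assms cb b0 in linarith)+
  ultimately have D: "sin b - sin a \<ge> (b/4) * (99/100)" by linarith
  have sb0: "0 \<le> sin b" using b0 assms pi2 by (intro sin_ge_zero) linarith+
  have sh0: "0 \<le> sin h" using h0 assms pi2 by (intro sin_ge_zero) linarith+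
  have s80: "0 \<le> sin (8*h)" using s8 h0 by linarith
  have P1: "sin (8*h) * sin b * cos (a+8*h) \<le> sin (8*h) * sin b * cos (2*a+8*h-2*h-b)"
    using cXY s80 sb0 by (intro mult_left_mono) auto
  have P2: "7*h * (61/100) * ((b/4) * (99/100)) \<le> sin (8*h) * cos (a+8*h) * (sin b - sin a)"
    apply (intro mult_mono)
    using s8 cY D h0 b0 s80 by auto
  have chb: "0 \<le> cos (h+b)" using assms pi2 b0 h0 by (intro cos_ge_zero) linarith+
  have P3: "sin b * sin h * cos (h+b) \<le> b * h * 1"
    apply (intro mult_mono)
    using sin_x_le_x[of b] sin_x_le_x[of h] b0 h0 sb0 sh0 chb by auto
  have "0 < b * h" using b0 h0 by simp
  then have "b*h*1 < 7*h * (61/100) * ((b/4) * (99/100))" by (simp add: algebra_simps)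
  moreover have E: "sin (8*h) * cos (a+8*h) * (sin b - sin a) = sin (8*h) * sin b * cos (a+8*h) - sin (8*h) * sin a * cos (a+8*h)"
    by (simp add: algebra_simps)
  ultimately show ?thesis using P1 P2 P3 by linarith
qed

lemma ident: fixes u w z p e :: complex assumes "w * z = 1"
  shows "e*u + w*(u*p - e*u) = u*w*(p - e*(1 - z))"
proof -
  have "u*w*(p - e*(1 - z)) = u*w*p - u*w*e + u*e*(w*z)" by (simp add: algebra_simps)
  then show ?thesis using assms by (simp add: algebra_simps)
qed

theorem lemma2:
  fixes Oc A B :: complex and \<eta> \<alpha> \<beta> :: real
  assumes "A \<in> sphere Oc 1" and "B \<in> sphere Oc 1"
    and "0 < \<eta>" and "\<eta> < 1/5"
    and "B = rot Oc \<eta> A"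
    and "0 < \<alpha>" and "\<alpha> < 3 * \<beta> / 4" and "\<beta> < \<eta>"
  shows "\<exists>P. P \<in> rot A \<alpha> ` sphere Oc 1 \<and> P \<in> rot B \<beta> ` sphere Oc 1
             \<and> P \<in> ball Oc 1 \<and> dist P A < 20 * \<eta>"
proof -
  define u where "u = A - Oc"
  have u1: "cmod u = 1" using assms(1) by (simp add: u_def dist_norm norm_minus_commute)
  have Ad: "A = Oc + u" by (simp add: u_def)
  have Bd: "B = Oc + cis \<eta> * u" using assms(5) by (simp add: rot_def u_def)
  define a where "a = \<alpha>/2"
  define b where "b = \<beta>/2"
  define h where "h = \<eta>/2"
  have ha: "\<alpha> = 2*a" and hb: "\<beta> = 2*b" and hh: "\<eta> = 2*h" by (simp_all add: a_def b_def h_def)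
  have a0: "0 < a" and ab: "a < 3*b/4" and bh: "b < h" and h10: "h < 1/10"
    using assms(3,4,6,7,8) by (simp_all add: a_def b_def h_def)
  have b0: "0 < b" and h0: "0 < h" using a0 ab bh by linarith+
  have pi2: "2 \<le> pi" by (rule pi_ge_two)
  define pp where "pp t = 1 + cis \<alpha> * (cis t - 1)" for t
  define cc where "cc = cis \<eta> * (1 - cis \<beta>)"
  define G where "G t = 8*(sin (t/2) * sin b * cos (2*a+t/2-2*h-b) - sin (t/2) * sin a * cos (a+t/2) - sin b * sin h * cos (h+b))" for t
  have ct: "cis (2*(t/2)) = cis t" for t :: real by simp
  have gG: "(cmod (pp t - cc))^2 - 1 = G t" for t
    using key[of a "t/2" h b] unfolding pp_def cc_def G_def ha hb hh ct .
  have G0: "G 0 < 0"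
  proof -
    have "0 < sin b" using b0 bh h10 pi2 by (intro sin_gt_zero) linarith+
    moreover have "0 < sin h" using h0 h10 pi2 by (intro sin_gt_zero) linarith+
    moreover have "0 < cos (h+b)" using b0 bh h10 pi2 by (intro cos_gt_zero) linarith+
    ultimately show ?thesis by (simp add: G_def)
  qed
  have GT: "G (8*\<eta>) > 0"
  proof -
    have e: "8*\<eta>/2 = 8*h" by (simp add: h_def)
    show ?thesis unfolding G_def e using pos[OF a0 ab bh h10] by simp
  qed
  have cont: "continuous_on {0..8*\<eta>} G" unfolding G_def[abs_def]
    by (intro continuous_on_mult continuous_on_diff continuous_on_const continuous_on_sin continuous_on_cos continuous_on_add continuous_on_id continuous_on_divide) auto
  obtain t where t: "0 \<le> t" "t \<le> 8*\<eta>" "G t = 0"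
  proof -
    have "G 0 \<le> 0" "0 \<le> G (8*\<eta>)" "0 \<le> 8*\<eta>" using G0 GT assms(3) by linarith+
    from IVT'[OF this cont] show ?thesis using that by blast
  qed
  have tpos: "0 < t" using t G0 by (cases "t = 0") auto
  have n1: "cmod (pp t - cc) = 1"
  proof -
    have "(cmod (pp t - cc))^2 = 1" using gG[of t] t(3) by simp
    then show ?thesis using norm_ge_zero[of "pp t - cc"] by (auto simp add: power2_eq_1_iff)
  qed
  have inside: "cmod (pp t) < 1"
  proof -
    have k: "(cmod (pp t))^2 - 1 = 8*(0 - sin (t/2) * sin a * cos (a+t/2) - 0)"
      using key[of a "t/2" h 0] unfolding pp_def ha ct by simp
    have "0 < sin (t/2)" using tpos t(2) hh h10 pi2 by (intro sin_gt_zero) linarith+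
    moreover have "0 < sin a" using a0 ab bh h10 pi2 by (intro sin_gt_zero) linarith+
    moreover have "0 < cos (a+t/2)" using tpos t(2) hh a0 ab bh h10 pi2 by (intro cos_gt_zero) linarith+
    ultimately have "0 < sin (t/2) * sin a * cos (a+t/2)" by simp
    moreover have "(cmod (pp t))^2 = 1 - 8*(sin (t/2) * sin a * cos (a+t/2))" using k by simp
    ultimately have "(cmod (pp t))^2 < 1" by linarith
    then show ?thesis by (simp add: abs_square_less_1)
  qed
  have close: "cmod (pp t - 1) \<le> t"
  proof -
    have "pp t - 1 = cis \<alpha> * (2 * \<i> * complex_of_real (sin (t/2)) * cis (t/2))"
      unfolding pp_def cis2[of "t/2", unfolded ct, symmetric] by simp
    then have "cmod (pp t - 1) = 2 * \<bar>sin (t/2)\<bar>" by (simp add: norm_mult)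
    also have "\<dots> \<le> 2 * \<bar>t/2\<bar>" using abs_sin_x_le_abs_x[of "t/2"] by simp
    finally show ?thesis using tpos by simp
  qed
  define P where "P = Oc + u * pp t"
  have m1: "P \<in> rot A \<alpha> ` sphere Oc 1"
  proof (rule image_eqI)
    show "P = rot A \<alpha> (Oc + cis t * u)"
      by (simp add: P_def rot_def Ad pp_def algebra_simps)
    show "Oc + cis t * u \<in> sphere Oc 1" by (simp add: dist_norm norm_mult u1)
  qed
  define Q where "Q = B + cis (-\<beta>) * (P - B)"
  have m2: "P \<in> rot B \<beta> ` sphere Oc 1"
  proof (rule image_eqI)
    have c1: "cis \<beta> * cis (-\<beta>) = 1" by (simp add: cis_mult)
    have "rot B \<beta> Q = B + (cis \<beta> * cis (-\<beta>)) * (P - B)" by (simp add: rot_def Q_def mult.assoc)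
    then show "P = rot B \<beta> Q" unfolding c1 by simp
    have c2: "cis (-\<beta>) * cis \<beta> = 1" by (simp add: cis_mult)
    have "Q - Oc = cis \<eta> * u + cis (-\<beta>) * (u * pp t - cis \<eta> * u)"
      by (simp add: Q_def Bd P_def algebra_simps)
    also have "\<dots> = u * cis (-\<beta>) * (pp t - cis \<eta> * (1 - cis \<beta>))" by (rule ident[OF c2])
    finally have "Q - Oc = u * cis (-\<beta>) * (pp t - cc)" by (simp add: cc_def)
    then have "cmod (Q - Oc) = 1" by (simp add: norm_mult u1 n1)
    then show "Q \<in> sphere Oc 1" by (simp add: dist_norm norm_minus_commute)
  qed
  have m3: "P \<in> ball Oc 1" using inside by (simp add: P_def dist_norm norm_mult u1)
  have "P - A = u * (pp t - 1)" by (simp add: P_def Ad algebra_simps)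
  then have "dist P A = cmod (pp t - 1)" by (simp add: dist_norm norm_mult u1)
  then have m4: "dist P A < 20 * \<eta>" using close t(2) assms(3) by linarith
  show ?thesis using m1 m2 m3 m4 by blast
qed

end
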